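(* Let $G_0$ be a non-abelian finite simple group and let $(G_n)_{n\geq1}$ be a sequence of finite groups such that every finite group is isomorphic to a subgroup of at least one $G_n$. Then the family of all finite groups $\Gamma$ that are extensions of $G_0^N$ by $G_n$ (indexed by $n\ge1$ and $N\ge1$) satisfies property (RÉAL): for every finite group $G$ there exist integers $n\ge1$, $N\ge1$, a group $\Gamma$ fitting in an exact sequence $1\to G_0^N\to\Gamma\to G_n\to1$, and a subgroup $H\le\Gamma$ with $N_\Gamma(H)/H\cong G$.
   Context: A group $\Gamma$ is called an extension of a group $N$ by a group $H$ if there is an exact sequence $1\to N\to\Gamma\to H\to1$. A family $\{\Gamma_i\}_{i}$ of finite groups satisfies property (RÉAL) if for every finite group $G$ there exist an index $i$ and a subgroup $H$ of $\Gamma_i$ with $N_{\Gamma_i}(H)/H\cong G$, where $N_{\Gamma_i}(H)$ is the normalizer of $H$ in $\Gamma_i$. *)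

theory Defs
  imports "HOL-Algebra.Algebra"
begin

definition is_extension ::
  "('g, 'm) monoid_scheme \<Rightarrow> ('n, 'k) monoid_scheme \<Rightarrow> ('q, 'l) monoid_scheme \<Rightarrow> bool" where
  "is_extension Gamma Nn Q \<longleftrightarrow> group Gamma \<and>
     (\<exists>i p. i \<in> hom Nn Gamma \<and> inj_on i (carrier Nn) \<and>
            p \<in> hom Gamma Q \<and> p ` carrier Gamma = carrier Q \<and>
            i ` carrier Nn = kernel Gamma Q p)"

definition power_group :: "('a, 'm) monoid_scheme \<Rightarrow> nat \<Rightarrow> (nat \<Rightarrow> 'a) monoid" where
  "power_group G0 N = product_group {..<N} (\<lambda>_. G0)"

end

theory Submission imports Defs begin



lemma conj_set: "g <#\<^bsub>G\<^esub> H #>\<^bsub>G\<^esub> x = (\<lambda>h. g \<otimes>\<^bsub>G\<^esub> h \<otimes>\<^bsub>G\<^esub> x) ` H"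
  unfolding l_coset_def r_coset_def by auto

lemma normalizer_char:
  assumes "H \<subseteq> carrier G"
  shows "normalizer G H = {g \<in> carrier G. (\<lambda>h. g \<otimes>\<^bsub>G\<^esub> h \<otimes>\<^bsub>G\<^esub> inv\<^bsub>G\<^esub> g) ` H = H}"
  using assms unfolding normalizer_def stabilizer_def conj_set by auto

lemma (in group) rc: "a \<in> carrier G \<Longrightarrow> x \<in> carrier G \<Longrightarrow> a \<otimes> x \<otimes> inv x = a"
  by (simp add: m_assoc)

lemma (in group) lc: "a \<in> carrier G \<Longrightarrow> x \<in> carrier G \<Longrightarrow> x \<otimes> (inv x \<otimes> a) = a"
  by (simp add: m_assoc[symmetric])

lemma (in group) cancel1: assumes x: "x \<in> carrier G" and y: "y \<in> carrier G"
  shows "x \<otimes> (inv x \<otimes> y \<otimes> x) \<otimes> inv x = y"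
proof -
  have "x \<otimes> (inv x \<otimes> y \<otimes> x) = (x \<otimes> (inv x \<otimes> y)) \<otimes> x" using x y by (simp add: m_assoc)
  hence "x \<otimes> (inv x \<otimes> y \<otimes> x) \<otimes> inv x = x \<otimes> (inv x \<otimes> y)" using x y rc by simp
  thus ?thesis using x y lc by simp
qed

lemma (in group) cancel2: assumes x: "x \<in> carrier G" and y: "y \<in> carrier G"
  shows "inv x \<otimes> (x \<otimes> y \<otimes> inv x) \<otimes> x = y"
  using cancel1[of "inv x" y] x y by simp

locale wr = G0: group G0 + B: group B
  for G0 :: "'a monoid" and B :: "'b monoid" +
  fixes e :: "nat \<Rightarrow> 'b" and N :: nat
  assumes e: "bij_betw e {..<N} (carrier B)"
begin

definition act :: "'b \<Rightarrow> nat \<Rightarrow> nat" where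
  "act b k = inv_into {..<N} e (b \<otimes>\<^bsub>B\<^esub> e k)"

lemma e_img: "e ` {..<N} = carrier B"
  using e by (simp add: bij_betw_def)

lemma e_in: "k \<in> {..<N} \<Longrightarrow> e k \<in> carrier B"
  using e_img by blast

lemma e_inj: "j \<in> {..<N} \<Longrightarrow> k \<in> {..<N} \<Longrightarrow> e j = e k \<Longrightarrow> j = k"
  using e unfolding bij_betw_def inj_on_def by blast

lemma act_in: assumes b: "b \<in> carrier B" and k: "k \<in> {..<N}" shows "act b k \<in> {..<N}"
proof -
  have "b \<otimes>\<^bsub>B\<^esub> e k \<in> e ` {..<N}" using e_img b e_in[OF k] by simp
  thus ?thesis unfolding act_def by (rule inv_into_into)
qed

lemma e_act: assumes b: "b \<in> carrier B" and k: "k \<in> {..<N}" shows "e (act b k) = b \<otimes>\<^bsub>B\<^esub> e k"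
proof -
  have "b \<otimes>\<^bsub>B\<^esub> e k \<in> e ` {..<N}" using e_img b e_in[OF k] by simp
  thus ?thesis unfolding act_def by (rule f_inv_into_f)
qed

lemma act_one: assumes k: "k \<in> {..<N}" shows "act \<one>\<^bsub>B\<^esub> k = k"
proof (rule e_inj)
  show "act \<one>\<^bsub>B\<^esub> k \<in> {..<N}" using act_in k by blast
  show "k \<in> {..<N}" by (rule k)
  have "e (act \<one>\<^bsub>B\<^esub> k) = \<one>\<^bsub>B\<^esub> \<otimes>\<^bsub>B\<^esub> e k" using e_act k by blast
  thus "e (act \<one>\<^bsub>B\<^esub> k) = e k" using e_in[OF k] by simp
qed

lemma act_mult: assumes b: "b \<in> carrier B" and c: "c \<in> carrier B" and k: "k \<in> {..<N}"
  shows "act (b \<otimes>\<^bsub>B\<^esub> c) k = act b (act c k)"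
proof (rule e_inj)
  show "act (b \<otimes>\<^bsub>B\<^esub> c) k \<in> {..<N}" using b c k act_in by blast
  show "act b (act c k) \<in> {..<N}" using b c k act_in by blast
  have "e (act (b \<otimes>\<^bsub>B\<^esub> c) k) = (b \<otimes>\<^bsub>B\<^esub> c) \<otimes>\<^bsub>B\<^esub> e k" using b c k e_act by blast
  also have "\<dots> = b \<otimes>\<^bsub>B\<^esub> (c \<otimes>\<^bsub>B\<^esub> e k)" using b c k e_in B.m_assoc by blast
  also have "\<dots> = b \<otimes>\<^bsub>B\<^esub> e (act c k)" using c k e_act by simp
  also have "\<dots> = e (act b (act c k))" using b c k act_in e_act by simp
  finally show "e (act (b \<otimes>\<^bsub>B\<^esub> c) k) = e (act b (act c k))" .
qed

lemma act_inv1: assumes b: "b \<in> carrier B" and k: "k \<in> {..<N}" shows "act (inv\<^bsub>B\<^esub> b) (act b k) = k"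
proof -
  have "act (inv\<^bsub>B\<^esub> b) (act b k) = act (inv\<^bsub>B\<^esub> b \<otimes>\<^bsub>B\<^esub> b) k"
    using act_mult[of "inv\<^bsub>B\<^esub> b" b k] b k by simp
  also have "\<dots> = k" using b k act_one by simp
  finally show ?thesis .
qed

lemma act_inv2: assumes b: "b \<in> carrier B" and k: "k \<in> {..<N}" shows "act b (act (inv\<^bsub>B\<^esub> b) k) = k"
proof -
  have "act b (act (inv\<^bsub>B\<^esub> b) k) = act (b \<otimes>\<^bsub>B\<^esub> inv\<^bsub>B\<^esub> b) k"
    using act_mult[of b "inv\<^bsub>B\<^esub> b" k] b k by simp
  also have "\<dots> = k" using b k act_one by simp
  finally show ?thesis .
qed

definition Wr :: "((nat \<Rightarrow> 'a) \<times> 'b) monoid" where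
  "Wr = \<lparr>carrier = (\<Pi>\<^sub>E k\<in>{..<N}. carrier G0) \<times> carrier B,
        monoid.mult = (\<lambda>x y. ((\<lambda>k\<in>{..<N}. fst x k \<otimes>\<^bsub>G0\<^esub> fst y (act (inv\<^bsub>B\<^esub> (snd x)) k)),
                               snd x \<otimes>\<^bsub>B\<^esub> snd y)),
        one = ((\<lambda>k\<in>{..<N}. \<one>\<^bsub>G0\<^esub>), \<one>\<^bsub>B\<^esub>)\<rparr>"

lemma Wr_carrier: "carrier Wr = (\<Pi>\<^sub>E k\<in>{..<N}. carrier G0) \<times> carrier B"
  by (simp add: Wr_def)
lemma Wr_mult: "x \<otimes>\<^bsub>Wr\<^esub> y = ((\<lambda>k\<in>{..<N}. fst x k \<otimes>\<^bsub>G0\<^esub> fst y (act (inv\<^bsub>B\<^esub> (snd x)) k)),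
                               snd x \<otimes>\<^bsub>B\<^esub> snd y)"
  by (simp add: Wr_def)
lemma Wr_one: "\<one>\<^bsub>Wr\<^esub> = ((\<lambda>k\<in>{..<N}. \<one>\<^bsub>G0\<^esub>), \<one>\<^bsub>B\<^esub>)"
  by (simp add: Wr_def)

lemma Wr_group: "group Wr"
proof (rule groupI)
  fix x y assume x: "x \<in> carrier Wr" and y: "y \<in> carrier Wr"
  show "x \<otimes>\<^bsub>Wr\<^esub> y \<in> carrier Wr"
    using x y act_in B.inv_closed by (auto simp: Wr_carrier Wr_mult PiE_iff)
next
  show "\<one>\<^bsub>Wr\<^esub> \<in> carrier Wr" by (auto simp: Wr_carrier Wr_one)
next
  fix x y z assume x: "x \<in> carrier Wr" and y: "y \<in> carrier Wr" and z: "z \<in> carrier Wr"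
  obtain f b where xf: "x = (f, b)" by fastforce
  obtain g c where yf: "y = (g, c)" by fastforce
  obtain h d where zf: "z = (h, d)" by fastforce
  have f: "f \<in> (\<Pi>\<^sub>E k\<in>{..<N}. carrier G0)" and b: "b \<in> carrier B" using x xf Wr_carrier by auto
  have g: "g \<in> (\<Pi>\<^sub>E k\<in>{..<N}. carrier G0)" and c: "c \<in> carrier B" using y yf Wr_carrier by auto
  have h: "h \<in> (\<Pi>\<^sub>E k\<in>{..<N}. carrier G0)" and d: "d \<in> carrier B" using z zf Wr_carrier by auto
  have eq: "(\<lambda>k\<in>{..<N}. (\<lambda>k\<in>{..<N}. f k \<otimes>\<^bsub>G0\<^esub> g (act (inv\<^bsub>B\<^esub> b) k)) k \<otimes>\<^bsub>G0\<^esub> h (act (inv\<^bsub>B\<^esub> (b \<otimes>\<^bsub>B\<^esub> c)) k))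
      = (\<lambda>k\<in>{..<N}. f k \<otimes>\<^bsub>G0\<^esub> (\<lambda>k\<in>{..<N}. g k \<otimes>\<^bsub>G0\<^esub> h (act (inv\<^bsub>B\<^esub> c) k)) (act (inv\<^bsub>B\<^esub> b) k))"
  proof (rule restrict_ext)
    fix k assume k: "k \<in> {..<N}"
    have k1: "act (inv\<^bsub>B\<^esub> b) k \<in> {..<N}" using k b act_in by blast
    have k2: "act (inv\<^bsub>B\<^esub> (b \<otimes>\<^bsub>B\<^esub> c)) k = act (inv\<^bsub>B\<^esub> c) (act (inv\<^bsub>B\<^esub> b) k)"
      using b c k by (simp add: B.inv_mult_group act_mult)
    have k3: "act (inv\<^bsub>B\<^esub> c) (act (inv\<^bsub>B\<^esub> b) k) \<in> {..<N}" using k1 c act_in by blast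
    have "f k \<in> carrier G0" "g (act (inv\<^bsub>B\<^esub> b) k) \<in> carrier G0"
         "h (act (inv\<^bsub>B\<^esub> c) (act (inv\<^bsub>B\<^esub> b) k)) \<in> carrier G0"
      using f g h k k1 k3 by (auto simp: PiE_iff)
    thus "(\<lambda>k\<in>{..<N}. f k \<otimes>\<^bsub>G0\<^esub> g (act (inv\<^bsub>B\<^esub> b) k)) k \<otimes>\<^bsub>G0\<^esub> h (act (inv\<^bsub>B\<^esub> (b \<otimes>\<^bsub>B\<^esub> c)) k)
      = f k \<otimes>\<^bsub>G0\<^esub> (\<lambda>k\<in>{..<N}. g k \<otimes>\<^bsub>G0\<^esub> h (act (inv\<^bsub>B\<^esub> c) k)) (act (inv\<^bsub>B\<^esub> b) k)"
      using k k1 k2 by (simp add: G0.m_assoc)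
  qed
  show "x \<otimes>\<^bsub>Wr\<^esub> y \<otimes>\<^bsub>Wr\<^esub> z = x \<otimes>\<^bsub>Wr\<^esub> (y \<otimes>\<^bsub>Wr\<^esub> z)"
    unfolding xf yf zf Wr_mult fst_conv snd_conv using eq b c d by (simp add: B.m_assoc)
next
  fix x assume x: "x \<in> carrier Wr"
  obtain f b where xf: "x = (f, b)" by fastforce
  have f: "f \<in> (\<Pi>\<^sub>E k\<in>{..<N}. carrier G0)" and b: "b \<in> carrier B" using x xf Wr_carrier by auto
  have "(\<lambda>k\<in>{..<N}. (\<lambda>k\<in>{..<N}. \<one>\<^bsub>G0\<^esub>) k \<otimes>\<^bsub>G0\<^esub> f (act (inv\<^bsub>B\<^esub> \<one>\<^bsub>B\<^esub>) k)) = f"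
  proof (rule ext)
    fix k show "(\<lambda>k\<in>{..<N}. (\<lambda>k\<in>{..<N}. \<one>\<^bsub>G0\<^esub>) k \<otimes>\<^bsub>G0\<^esub> f (act (inv\<^bsub>B\<^esub> \<one>\<^bsub>B\<^esub>) k)) k = f k"
      using f by (cases "k \<in> {..<N}") (auto simp: act_one PiE_iff extensional_def)
  qed
  thus "\<one>\<^bsub>Wr\<^esub> \<otimes>\<^bsub>Wr\<^esub> x = x"
    using b by (simp add: xf Wr_mult Wr_one)
  let ?y = "((\<lambda>k\<in>{..<N}. inv\<^bsub>G0\<^esub> (f (act b k))), inv\<^bsub>B\<^esub> b)"
  have "?y \<in> carrier Wr" using f b act_in by (auto simp: Wr_carrier PiE_iff)
  moreover have "(\<lambda>k\<in>{..<N}. (\<lambda>k\<in>{..<N}. inv\<^bsub>G0\<^esub> (f (act b k))) k \<otimes>\<^bsub>G0\<^esub> f (act (inv\<^bsub>B\<^esub> (inv\<^bsub>B\<^esub> b)) k))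
     = (\<lambda>k\<in>{..<N}. \<one>\<^bsub>G0\<^esub>)"
  proof (rule restrict_ext)
    fix k assume k: "k \<in> {..<N}"
    have "f (act b k) \<in> carrier G0" using f k b act_in by (auto simp: PiE_iff)
    thus "(\<lambda>k\<in>{..<N}. inv\<^bsub>G0\<^esub> (f (act b k))) k \<otimes>\<^bsub>G0\<^esub> f (act (inv\<^bsub>B\<^esub> (inv\<^bsub>B\<^esub> b)) k) = \<one>\<^bsub>G0\<^esub>"
      using k b by simp
  qed
  hence "?y \<otimes>\<^bsub>Wr\<^esub> x = \<one>\<^bsub>Wr\<^esub>"
    using b by (simp add: xf Wr_mult Wr_one)
  ultimately show "\<exists>y\<in>carrier Wr. y \<otimes>\<^bsub>Wr\<^esub> x = \<one>\<^bsub>Wr\<^esub>" by blast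
qed


lemma Wr_inv: assumes f: "f \<in> (\<Pi>\<^sub>E k\<in>{..<N}. carrier G0)" and b: "b \<in> carrier B"
  shows "inv\<^bsub>Wr\<^esub> (f, b) = ((\<lambda>k\<in>{..<N}. inv\<^bsub>G0\<^esub> (f (act b k))), inv\<^bsub>B\<^esub> b)"
proof (rule group.inv_equality[OF Wr_group])
  have "(\<lambda>k\<in>{..<N}. (\<lambda>k\<in>{..<N}. inv\<^bsub>G0\<^esub> (f (act b k))) k \<otimes>\<^bsub>G0\<^esub> f (act (inv\<^bsub>B\<^esub> (inv\<^bsub>B\<^esub> b)) k))
     = (\<lambda>k\<in>{..<N}. \<one>\<^bsub>G0\<^esub>)"
  proof (rule restrict_ext)
    fix k assume k: "k \<in> {..<N}"
    have "f (act b k) \<in> carrier G0" using f k b act_in by (auto simp: PiE_iff)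
    thus "(\<lambda>k\<in>{..<N}. inv\<^bsub>G0\<^esub> (f (act b k))) k \<otimes>\<^bsub>G0\<^esub> f (act (inv\<^bsub>B\<^esub> (inv\<^bsub>B\<^esub> b)) k) = \<one>\<^bsub>G0\<^esub>"
      using k b by simp
  qed
  thus "((\<lambda>k\<in>{..<N}. inv\<^bsub>G0\<^esub> (f (act b k))), inv\<^bsub>B\<^esub> b) \<otimes>\<^bsub>Wr\<^esub> (f, b) = \<one>\<^bsub>Wr\<^esub>"
    using b by (simp add: Wr_mult Wr_one)
  show "(f, b) \<in> carrier Wr" using f b by (simp add: Wr_carrier)
  show "((\<lambda>k\<in>{..<N}. inv\<^bsub>G0\<^esub> (f (act b k))), inv\<^bsub>B\<^esub> b) \<in> carrier Wr"
    using f b act_in by (auto simp: Wr_carrier PiE_iff)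
qed

lemma Wr_ext: "is_extension Wr (power_group G0 N) B"
  unfolding is_extension_def
proof (intro conjI Wr_group exI[of _ "\<lambda>f. (f, \<one>\<^bsub>B\<^esub>)"] exI[of _ snd])
  show "(\<lambda>f. (f, \<one>\<^bsub>B\<^esub>)) \<in> hom (power_group G0 N) Wr"
  proof (rule homI)
    fix f assume "f \<in> carrier (power_group G0 N)"
    thus "(f, \<one>\<^bsub>B\<^esub>) \<in> carrier Wr" by (simp add: power_group_def Wr_carrier)
  next
    fix f g assume f: "f \<in> carrier (power_group G0 N)" and g: "g \<in> carrier (power_group G0 N)"
    have "(\<lambda>k\<in>{..<N}. f k \<otimes>\<^bsub>G0\<^esub> g k) = (\<lambda>k\<in>{..<N}. f k \<otimes>\<^bsub>G0\<^esub> g (act (inv\<^bsub>B\<^esub> \<one>\<^bsub>B\<^esub>) k))"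
      by (rule restrict_ext) (simp add: act_one)
    thus "(f \<otimes>\<^bsub>power_group G0 N\<^esub> g, \<one>\<^bsub>B\<^esub>) = (f, \<one>\<^bsub>B\<^esub>) \<otimes>\<^bsub>Wr\<^esub> (g, \<one>\<^bsub>B\<^esub>)"
      by (simp add: power_group_def Wr_mult)
  qed
  show "inj_on (\<lambda>f. (f, \<one>\<^bsub>B\<^esub>)) (carrier (power_group G0 N))"
    by (rule inj_onI) (rule fst_conv[THEN subst], simp)
  show "snd \<in> hom Wr B"
  proof (rule homI)
    fix x assume "x \<in> carrier Wr" thus "snd x \<in> carrier B" unfolding Wr_carrier by (simp add: mem_Times_iff)
  next
    fix x y show "snd (x \<otimes>\<^bsub>Wr\<^esub> y) = snd x \<otimes>\<^bsub>B\<^esub> snd y" unfolding Wr_mult by (rule snd_conv)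
  qed
  have ne: "(\<lambda>k\<in>{..<N}. \<one>\<^bsub>G0\<^esub>) \<in> (\<Pi>\<^sub>E k\<in>{..<N}. carrier G0)" by simp
  show "snd ` carrier Wr = carrier B"
  proof -
    have ne2: "(\<Pi>\<^sub>E k\<in>{..<N}. carrier G0) \<noteq> {}" using ne by blast
    show ?thesis unfolding Wr_carrier snd_image_times using ne2 by (simp only: if_False)
  qed
  show "(\<lambda>f. (f, \<one>\<^bsub>B\<^esub>)) ` carrier (power_group G0 N) = kernel Wr B snd"
  proof (intro equalityI subsetI)
    fix x assume "x \<in> (\<lambda>f. (f, \<one>\<^bsub>B\<^esub>)) ` carrier (power_group G0 N)"
    then obtain f where "f \<in> (\<Pi>\<^sub>E k\<in>{..<N}. carrier G0)" "x = (f, \<one>\<^bsub>B\<^esub>)" by (auto simp: power_group_def)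
    thus "x \<in> kernel Wr B snd" unfolding kernel_def Wr_carrier by simp
  next
    fix x assume "x \<in> kernel Wr B snd"
    hence x1: "x \<in> carrier Wr" and x2: "snd x = \<one>\<^bsub>B\<^esub>" unfolding kernel_def by simp_all
    have x3: "fst x \<in> carrier (power_group G0 N)" using x1 unfolding Wr_carrier power_group_def
      by (simp add: mem_Times_iff)
    have "x = (fst x, \<one>\<^bsub>B\<^esub>)" using x2 by (metis prod.collapse)
    thus "x \<in> (\<lambda>f. (f, \<one>\<^bsub>B\<^esub>)) ` carrier (power_group G0 N)"
      using x3 by (rule image_eqI)
  qed
qed

end

locale wr2 = wr +
  fixes S M
  assumes S: "subgroup S B" and M: "subgroup M G0" and Mne: "M \<noteq> carrier G0"
  and selfnorm: "\<And>g. g \<in> carrier G0 \<Longrightarrow> (\<lambda>h. g \<otimes>\<^bsub>G0\<^esub> h \<otimes>\<^bsub>G0\<^esub> inv\<^bsub>G0\<^esub> g) ` M = M \<Longrightarrow> g \<in> M"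
begin

definition Cf :: "nat \<Rightarrow> 'a set" where
  "Cf k = (if e k \<in> S then carrier G0 else M)"

definition C where "C = (\<Pi>\<^sub>E k\<in>{..<N}. Cf k)"
definition H where "H = C \<times> {\<one>\<^bsub>B\<^esub>}"

lemma Cf_sub: "subgroup (Cf k) G0"
  unfolding Cf_def using M G0.subgroup_self by simp

lemma Cf_c: "Cf k \<subseteq> carrier G0"
  using subgroup.subset[OF Cf_sub] .

lemma C_sub: "C \<subseteq> (\<Pi>\<^sub>E k\<in>{..<N}. carrier G0)"
  unfolding C_def using Cf_c by (auto simp: PiE_iff)

lemma H_sub: "H \<subseteq> carrier Wr"
  unfolding H_def Wr_carrier using C_sub by auto

lemma conj_formula:
  assumes f: "f \<in> (\<Pi>\<^sub>E k\<in>{..<N}. carrier G0)" and b: "b \<in> carrier B"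
    and c: "c \<in> (\<Pi>\<^sub>E k\<in>{..<N}. carrier G0)"
  shows "(f, b) \<otimes>\<^bsub>Wr\<^esub> (c, \<one>\<^bsub>B\<^esub>) \<otimes>\<^bsub>Wr\<^esub> inv\<^bsub>Wr\<^esub> (f, b) =
         ((\<lambda>k\<in>{..<N}. f k \<otimes>\<^bsub>G0\<^esub> c (act (inv\<^bsub>B\<^esub> b) k) \<otimes>\<^bsub>G0\<^esub> inv\<^bsub>G0\<^esub> (f k)), \<one>\<^bsub>B\<^esub>)"
proof -
  have "(\<lambda>k\<in>{..<N}. (\<lambda>k\<in>{..<N}. f k \<otimes>\<^bsub>G0\<^esub> c (act (inv\<^bsub>B\<^esub> b) k)) k \<otimes>\<^bsub>G0\<^esub>
           (\<lambda>k\<in>{..<N}. inv\<^bsub>G0\<^esub> (f (act b k))) (act (inv\<^bsub>B\<^esub> (b \<otimes>\<^bsub>B\<^esub> \<one>\<^bsub>B\<^esub>)) k))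
       = (\<lambda>k\<in>{..<N}. f k \<otimes>\<^bsub>G0\<^esub> c (act (inv\<^bsub>B\<^esub> b) k) \<otimes>\<^bsub>G0\<^esub> inv\<^bsub>G0\<^esub> (f k))"
  proof (rule restrict_ext)
    fix k assume k: "k \<in> {..<N}"
    have k1: "act (inv\<^bsub>B\<^esub> b) k \<in> {..<N}" using act_in b k by blast
    show "(\<lambda>k\<in>{..<N}. f k \<otimes>\<^bsub>G0\<^esub> c (act (inv\<^bsub>B\<^esub> b) k)) k \<otimes>\<^bsub>G0\<^esub>
           (\<lambda>k\<in>{..<N}. inv\<^bsub>G0\<^esub> (f (act b k))) (act (inv\<^bsub>B\<^esub> (b \<otimes>\<^bsub>B\<^esub> \<one>\<^bsub>B\<^esub>)) k)
         = f k \<otimes>\<^bsub>G0\<^esub> c (act (inv\<^bsub>B\<^esub> b) k) \<otimes>\<^bsub>G0\<^esub> inv\<^bsub>G0\<^esub> (f k)"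
      using k k1 b by (simp add: act_inv2)
  qed
  thus ?thesis using f b by (simp add: Wr_inv Wr_mult)
qed


definition cjf where
  "cjf f b c = (\<lambda>k\<in>{..<N}. f k \<otimes>\<^bsub>G0\<^esub> c (act (inv\<^bsub>B\<^esub> b) k) \<otimes>\<^bsub>G0\<^esub> inv\<^bsub>G0\<^esub> (f k))"

lemma conj_img:
  assumes f: "f \<in> (\<Pi>\<^sub>E k\<in>{..<N}. carrier G0)" and b: "b \<in> carrier B"
  shows "(\<lambda>h. (f, b) \<otimes>\<^bsub>Wr\<^esub> h \<otimes>\<^bsub>Wr\<^esub> inv\<^bsub>Wr\<^esub> (f, b)) ` H = (\<lambda>c. (cjf f b c, \<one>\<^bsub>B\<^esub>)) ` C"
proof -
  have "(\<lambda>h. (f, b) \<otimes>\<^bsub>Wr\<^esub> h \<otimes>\<^bsub>Wr\<^esub> inv\<^bsub>Wr\<^esub> (f, b)) ` H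
      = (\<lambda>h. (f, b) \<otimes>\<^bsub>Wr\<^esub> h \<otimes>\<^bsub>Wr\<^esub> inv\<^bsub>Wr\<^esub> (f, b)) ` ((\<lambda>c. (c, \<one>\<^bsub>B\<^esub>)) ` C)"
    unfolding H_def by auto
  also have "\<dots> = (\<lambda>c. (f, b) \<otimes>\<^bsub>Wr\<^esub> (c, \<one>\<^bsub>B\<^esub>) \<otimes>\<^bsub>Wr\<^esub> inv\<^bsub>Wr\<^esub> (f, b)) ` C"
    by (simp add: image_image)
  also have "\<dots> = (\<lambda>c. (cjf f b c, \<one>\<^bsub>B\<^esub>)) ` C"
  proof (rule image_cong[OF refl])
    fix c assume "c \<in> C"
    hence "c \<in> (\<Pi>\<^sub>E k\<in>{..<N}. carrier G0)" using C_sub by blast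
    thus "(f, b) \<otimes>\<^bsub>Wr\<^esub> (c, \<one>\<^bsub>B\<^esub>) \<otimes>\<^bsub>Wr\<^esub> inv\<^bsub>Wr\<^esub> (f, b) = (cjf f b c, \<one>\<^bsub>B\<^esub>)"
      unfolding cjf_def using conj_formula f b by blast
  qed
  finally show ?thesis .
qed

lemma Cf_shift: assumes b: "b \<in> S" and k: "k \<in> {..<N}" shows "Cf (act (inv\<^bsub>B\<^esub> b) k) = Cf k"
proof -
  have bc: "b \<in> carrier B" using subgroup.subset[OF S] b by (rule subsetD)
  have ib: "inv\<^bsub>B\<^esub> b \<in> S" by (rule subgroup.m_inv_closed[OF S b])
  have ek: "e k \<in> carrier B" by (rule e_in[OF k])
  have ea: "e (act (inv\<^bsub>B\<^esub> b) k) = inv\<^bsub>B\<^esub> b \<otimes>\<^bsub>B\<^esub> e k" using e_act[OF B.inv_closed[OF bc] k] .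
  have "inv\<^bsub>B\<^esub> b \<otimes>\<^bsub>B\<^esub> e k \<in> S \<longleftrightarrow> e k \<in> S"
  proof
    assume "inv\<^bsub>B\<^esub> b \<otimes>\<^bsub>B\<^esub> e k \<in> S"
    hence "b \<otimes>\<^bsub>B\<^esub> (inv\<^bsub>B\<^esub> b \<otimes>\<^bsub>B\<^esub> e k) \<in> S" by (rule subgroup.m_closed[OF S b])
    moreover have "b \<otimes>\<^bsub>B\<^esub> (inv\<^bsub>B\<^esub> b \<otimes>\<^bsub>B\<^esub> e k) = e k" by (rule B.lc[OF ek bc])
    ultimately show "e k \<in> S" by simp
  next
    assume "e k \<in> S" thus "inv\<^bsub>B\<^esub> b \<otimes>\<^bsub>B\<^esub> e k \<in> S" by (rule subgroup.m_closed[OF S ib])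
  qed
  thus ?thesis by (simp only: Cf_def ea)
qed

lemma one_C: "(\<lambda>k\<in>{..<N}. \<one>\<^bsub>G0\<^esub>) \<in> C"
  unfolding C_def using Cf_sub subgroup.one_closed by (auto simp: PiE_iff)

lemma norm_sup: assumes f: "f \<in> C" and b: "b \<in> S" shows "(f, b) \<in> normalizer Wr H"
proof -
  have fc: "f \<in> (\<Pi>\<^sub>E k\<in>{..<N}. carrier G0)" using f C_sub by blast
  have bc: "b \<in> carrier B" using subgroup.subset[OF S] b by (rule subsetD)
  have fk: "\<And>k. k \<in> {..<N} \<Longrightarrow> f k \<in> Cf k" using f unfolding C_def by (auto simp: PiE_iff)
  have fkc: "\<And>k. k \<in> {..<N} \<Longrightarrow> f k \<in> carrier G0" using fc by (auto simp: PiE_iff)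
  have "(\<lambda>c. (cjf f b c, \<one>\<^bsub>B\<^esub>)) ` C = H"
  proof (intro equalityI subsetI)
    fix x assume "x \<in> (\<lambda>c. (cjf f b c, \<one>\<^bsub>B\<^esub>)) ` C"
    then obtain c where c: "c \<in> C" and x: "x = (cjf f b c, \<one>\<^bsub>B\<^esub>)" by blast
    have "cjf f b c \<in> C" unfolding C_def cjf_def
    proof (rule restrict_PiE_iff[THEN iffD2], intro ballI)
      fix k assume k: "k \<in> {..<N}"
      have k1: "act (inv\<^bsub>B\<^esub> b) k \<in> {..<N}" using act_in bc k by blast
      have "c (act (inv\<^bsub>B\<^esub> b) k) \<in> Cf k" using c k1 Cf_shift[OF b k] unfolding C_def by (auto simp: PiE_iff)
      thus "f k \<otimes>\<^bsub>G0\<^esub> c (act (inv\<^bsub>B\<^esub> b) k) \<otimes>\<^bsub>G0\<^esub> inv\<^bsub>G0\<^esub> (f k) \<in> Cf k"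
        using fk[OF k] Cf_sub[of k] by (simp add: subgroup.m_closed subgroup.m_inv_closed)
    qed
    thus "x \<in> H" unfolding H_def x by simp
  next
    fix x assume "x \<in> H"
    then obtain d where d: "d \<in> C" and x: "x = (d, \<one>\<^bsub>B\<^esub>)" unfolding H_def by blast
    have dk: "\<And>k. k \<in> {..<N} \<Longrightarrow> d k \<in> Cf k" using d unfolding C_def by (auto simp: PiE_iff)
    define c where "c = (\<lambda>j\<in>{..<N}. inv\<^bsub>G0\<^esub> (f (act b j)) \<otimes>\<^bsub>G0\<^esub> d (act b j) \<otimes>\<^bsub>G0\<^esub> f (act b j))"
    have cC: "c \<in> C" unfolding C_def c_def
    proof (rule restrict_PiE_iff[THEN iffD2], intro ballI)
      fix j assume j: "j \<in> {..<N}"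
      have j1: "act b j \<in> {..<N}" using act_in bc j by blast
      have "Cf (act b j) = Cf j" using Cf_shift[OF b j1] act_inv1[OF bc j] by simp
      thus "inv\<^bsub>G0\<^esub> (f (act b j)) \<otimes>\<^bsub>G0\<^esub> d (act b j) \<otimes>\<^bsub>G0\<^esub> f (act b j) \<in> Cf j"
        using fk[OF j1] dk[OF j1] Cf_sub[of "act b j"] by (simp add: subgroup.m_closed subgroup.m_inv_closed)
    qed
    have "cjf f b c = d"
    proof (rule ext)
      fix k show "cjf f b c k = d k"
      proof (cases "k \<in> {..<N}")
        case True
        have k1: "act (inv\<^bsub>B\<^esub> b) k \<in> {..<N}" using act_in bc True by blast
        have "c (act (inv\<^bsub>B\<^esub> b) k) = inv\<^bsub>G0\<^esub> (f k) \<otimes>\<^bsub>G0\<^esub> d k \<otimes>\<^bsub>G0\<^esub> f k"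
          unfolding c_def using k1 act_inv2[OF bc True] by simp
        moreover have "d k \<in> carrier G0" using dk[OF True] Cf_c by blast
        ultimately show ?thesis unfolding cjf_def using True fkc[OF True] by (simp add: G0.cancel1)
      next
        case False
        thus ?thesis unfolding cjf_def using d C_def PiE_arb by fastforce
      qed
    qed
    thus "x \<in> (\<lambda>c. (cjf f b c, \<one>\<^bsub>B\<^esub>)) ` C" using cC x by blast
  qed
  thus ?thesis unfolding normalizer_char[OF H_sub] using conj_img[OF fc bc] fc bc by (simp add: Wr_carrier)
qed


lemma H_eq: "H = (\<lambda>c. (c, \<one>\<^bsub>B\<^esub>)) ` C"
  unfolding H_def by auto

lemma norm_sub: assumes x: "(f, b) \<in> normalizer Wr H" shows "f \<in> C \<and> b \<in> S"
proof -
  have fc: "f \<in> (\<Pi>\<^sub>E k\<in>{..<N}. carrier G0)" and bc: "b \<in> carrier B"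
    using x unfolding normalizer_char[OF H_sub] Wr_carrier by auto
  have img: "(\<lambda>c. (cjf f b c, \<one>\<^bsub>B\<^esub>)) ` C = H"
  proof -
    have "(\<lambda>h. (f, b) \<otimes>\<^bsub>Wr\<^esub> h \<otimes>\<^bsub>Wr\<^esub> inv\<^bsub>Wr\<^esub> (f, b)) ` H = H"
      using x unfolding normalizer_char[OF H_sub] by simp
    thus ?thesis using conj_img[OF fc bc] by simp
  qed
  have fkc: "\<And>k. k \<in> {..<N} \<Longrightarrow> f k \<in> carrier G0" using fc by (auto simp: PiE_iff)
  have A: "f k \<otimes>\<^bsub>G0\<^esub> y \<otimes>\<^bsub>G0\<^esub> inv\<^bsub>G0\<^esub> (f k) \<in> Cf k"
    if k: "k \<in> {..<N}" and y: "y \<in> Cf (act (inv\<^bsub>B\<^esub> b) k)" for k y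
  proof -
    have k1: "act (inv\<^bsub>B\<^esub> b) k \<in> {..<N}" using act_in[OF B.inv_closed[OF bc] k] .
    define c where "c = (\<lambda>j\<in>{..<N}. if j = act (inv\<^bsub>B\<^esub> b) k then y else \<one>\<^bsub>G0\<^esub>)"
    have cC: "c \<in> C" unfolding C_def c_def
    proof (rule restrict_PiE_iff[THEN iffD2], intro ballI)
      fix j assume "j \<in> {..<N}"
      show "(if j = act (inv\<^bsub>B\<^esub> b) k then y else \<one>\<^bsub>G0\<^esub>) \<in> Cf j"
        using y subgroup.one_closed[OF Cf_sub[of j]] by auto
    qed
    have "(cjf f b c, \<one>\<^bsub>B\<^esub>) \<in> H" using img cC by blast
    hence "cjf f b c \<in> C" unfolding H_def by blast
    hence "cjf f b c k \<in> Cf k" using k unfolding C_def by (auto simp: PiE_iff)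
    moreover have "cjf f b c k = f k \<otimes>\<^bsub>G0\<^esub> y \<otimes>\<^bsub>G0\<^esub> inv\<^bsub>G0\<^esub> (f k)"
      unfolding cjf_def c_def using k k1 by simp
    ultimately show ?thesis by simp
  qed
  have Bp: "\<exists>y\<in>Cf (act (inv\<^bsub>B\<^esub> b) k). f k \<otimes>\<^bsub>G0\<^esub> y \<otimes>\<^bsub>G0\<^esub> inv\<^bsub>G0\<^esub> (f k) = z"
    if k: "k \<in> {..<N}" and z: "z \<in> Cf k" for k z
  proof -
    have k1: "act (inv\<^bsub>B\<^esub> b) k \<in> {..<N}" using act_in[OF B.inv_closed[OF bc] k] .
    define d where "d = (\<lambda>j\<in>{..<N}. if j = k then z else \<one>\<^bsub>G0\<^esub>)"
    have dC: "d \<in> C" unfolding C_def d_def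
    proof (rule restrict_PiE_iff[THEN iffD2], intro ballI)
      fix j assume "j \<in> {..<N}"
      show "(if j = k then z else \<one>\<^bsub>G0\<^esub>) \<in> Cf j"
        using z subgroup.one_closed[OF Cf_sub[of j]] by auto
    qed
    have "(d, \<one>\<^bsub>B\<^esub>) \<in> H" unfolding H_def using dC by blast
    hence "(d, \<one>\<^bsub>B\<^esub>) \<in> (\<lambda>c. (cjf f b c, \<one>\<^bsub>B\<^esub>)) ` C" using img by simp
    then obtain c where cC: "c \<in> C" and "(d, \<one>\<^bsub>B\<^esub>) = (cjf f b c, \<one>\<^bsub>B\<^esub>)"
      by (rule imageE)
    hence "cjf f b c = d" by simp
    hence "cjf f b c k = z" unfolding d_def using k by simp
    hence "f k \<otimes>\<^bsub>G0\<^esub> c (act (inv\<^bsub>B\<^esub> b) k) \<otimes>\<^bsub>G0\<^esub> inv\<^bsub>G0\<^esub> (f k) = z"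
      unfolding cjf_def using k by simp
    moreover have "c (act (inv\<^bsub>B\<^esub> b) k) \<in> Cf (act (inv\<^bsub>B\<^esub> b) k)"
      using cC k1 unfolding C_def by (auto simp: PiE_iff)
    ultimately show ?thesis by blast
  qed
  have bS: "b \<in> S"
  proof (rule ccontr)
    assume nb: "b \<notin> S"
    have ibS: "inv\<^bsub>B\<^esub> b \<notin> S"
    proof
      assume "inv\<^bsub>B\<^esub> b \<in> S"
      hence "inv\<^bsub>B\<^esub> (inv\<^bsub>B\<^esub> b) \<in> S" by (rule subgroup.m_inv_closed[OF S])
      thus False using nb bc by simp
    qed
    have "\<one>\<^bsub>B\<^esub> \<in> e ` {..<N}" using e_img by simp
    then obtain k0 where ek0': "\<one>\<^bsub>B\<^esub> = e k0" and k0: "k0 \<in> {..<N}" by (rule imageE)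
    have ek0: "e k0 = \<one>\<^bsub>B\<^esub>" using ek0' by simp
    have C0: "Cf k0 = carrier G0" unfolding Cf_def ek0 using subgroup.one_closed[OF S] by simp
    have ej: "e (act (inv\<^bsub>B\<^esub> b) k0) = inv\<^bsub>B\<^esub> b" using e_act[OF B.inv_closed[OF bc] k0] ek0 bc by simp
    have Cj: "Cf (act (inv\<^bsub>B\<^esub> b) k0) = M" unfolding Cf_def ej using ibS by simp
    have "carrier G0 \<subseteq> M"
    proof
      fix w assume w: "w \<in> carrier G0"
      define z where "z = f k0 \<otimes>\<^bsub>G0\<^esub> w \<otimes>\<^bsub>G0\<^esub> inv\<^bsub>G0\<^esub> (f k0)"
      have fk0: "f k0 \<in> carrier G0" by (rule fkc[OF k0])
      have z: "z \<in> Cf k0" unfolding C0 z_def using w fk0 by simp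
      obtain y where y: "y \<in> M" and yz: "f k0 \<otimes>\<^bsub>G0\<^esub> y \<otimes>\<^bsub>G0\<^esub> inv\<^bsub>G0\<^esub> (f k0) = z"
        using Bp[OF k0 z] Cj by auto
      have yc: "y \<in> carrier G0" using subgroup.subset[OF M] y by (rule subsetD)
      have "y = inv\<^bsub>G0\<^esub> (f k0) \<otimes>\<^bsub>G0\<^esub> z \<otimes>\<^bsub>G0\<^esub> f k0"
        unfolding yz[symmetric] using G0.cancel2[OF fk0 yc] by simp
      also have "\<dots> = w" unfolding z_def using G0.cancel2[OF fk0 w] .
      finally show "w \<in> M" using y by simp
    qed
    hence "M = carrier G0" using subgroup.subset[OF M] by (rule equalityI[rotated])
    thus False using Mne by simp
  qed
  have shift: "\<And>k. k \<in> {..<N} \<Longrightarrow> Cf (act (inv\<^bsub>B\<^esub> b) k) = Cf k" using Cf_shift[OF bS] .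
  have "f k \<in> Cf k" if k: "k \<in> {..<N}" for k
  proof (cases "e k \<in> S")
    case True thus ?thesis unfolding Cf_def using fkc[OF k] by simp
  next
    case False
    hence CM: "Cf k = M" unfolding Cf_def by simp
    have "(\<lambda>h. f k \<otimes>\<^bsub>G0\<^esub> h \<otimes>\<^bsub>G0\<^esub> inv\<^bsub>G0\<^esub> (f k)) ` M = M"
    proof (intro equalityI subsetI)
      fix x assume "x \<in> (\<lambda>h. f k \<otimes>\<^bsub>G0\<^esub> h \<otimes>\<^bsub>G0\<^esub> inv\<^bsub>G0\<^esub> (f k)) ` M"
      then obtain y where y: "y \<in> M" and xy: "x = f k \<otimes>\<^bsub>G0\<^esub> y \<otimes>\<^bsub>G0\<^esub> inv\<^bsub>G0\<^esub> (f k)" by blast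
      show "x \<in> M" using A[OF k, of y] y shift[OF k] CM xy by simp
    next
      fix z assume "z \<in> M"
      then obtain y where "y \<in> M" "f k \<otimes>\<^bsub>G0\<^esub> y \<otimes>\<^bsub>G0\<^esub> inv\<^bsub>G0\<^esub> (f k) = z"
        using Bp[OF k, of z] shift[OF k] CM by auto
      thus "z \<in> (\<lambda>h. f k \<otimes>\<^bsub>G0\<^esub> h \<otimes>\<^bsub>G0\<^esub> inv\<^bsub>G0\<^esub> (f k)) ` M" by blast
    qed
    hence "f k \<in> M" using selfnorm[OF fkc[OF k]] by simp
    thus ?thesis using CM by simp
  qed
  hence "f \<in> C" unfolding C_def using fc by (auto simp: PiE_iff)
  thus ?thesis using bS by simp
qed

lemma normalizer_eq: "normalizer Wr H = C \<times> S"
proof (intro equalityI subsetI)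
  fix x assume "x \<in> normalizer Wr H"
  thus "x \<in> C \<times> S" using norm_sub[of "fst x" "snd x"] by (simp add: mem_Times_iff)
next
  fix x assume "x \<in> C \<times> S"
  thus "x \<in> normalizer Wr H" using norm_sup[of "fst x" "snd x"] by (simp add: mem_Times_iff)
qed

lemma H_subgroup: "subgroup H Wr"
proof (rule group.subgroupI[OF Wr_group])
  show "H \<subseteq> carrier Wr" by (rule H_sub)
  show "H \<noteq> {}" unfolding H_def using one_C by blast
next
  fix x assume "x \<in> H"
  then obtain c where c: "c \<in> C" and x: "x = (c, \<one>\<^bsub>B\<^esub>)" unfolding H_def by blast
  have cc: "c \<in> (\<Pi>\<^sub>E k\<in>{..<N}. carrier G0)" using c C_sub by blast
  have "(\<lambda>k\<in>{..<N}. inv\<^bsub>G0\<^esub> (c (act \<one>\<^bsub>B\<^esub> k))) \<in> C"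
    unfolding C_def
  proof (rule restrict_PiE_iff[THEN iffD2], intro ballI)
    fix k assume k: "k \<in> {..<N}"
    have "c k \<in> Cf k" using c k unfolding C_def by (auto simp: PiE_iff)
    thus "inv\<^bsub>G0\<^esub> (c (act \<one>\<^bsub>B\<^esub> k)) \<in> Cf k" using act_one[OF k] subgroup.m_inv_closed[OF Cf_sub] by simp
  qed
  thus "inv\<^bsub>Wr\<^esub> x \<in> H" unfolding x Wr_inv[OF cc B.one_closed] H_def by simp
next
  fix x y assume "x \<in> H" "y \<in> H"
  then obtain c d where c: "c \<in> C" and x: "x = (c, \<one>\<^bsub>B\<^esub>)" and d: "d \<in> C" and y: "y = (d, \<one>\<^bsub>B\<^esub>)"
    unfolding H_def by blast
  have "(\<lambda>k\<in>{..<N}. c k \<otimes>\<^bsub>G0\<^esub> d (act (inv\<^bsub>B\<^esub> \<one>\<^bsub>B\<^esub>) k)) \<in> C"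
    unfolding C_def
  proof (rule restrict_PiE_iff[THEN iffD2], intro ballI)
    fix k assume k: "k \<in> {..<N}"
    have "c k \<in> Cf k" "d k \<in> Cf k" using c d k unfolding C_def by (auto simp: PiE_iff)
    thus "c k \<otimes>\<^bsub>G0\<^esub> d (act (inv\<^bsub>B\<^esub> \<one>\<^bsub>B\<^esub>) k) \<in> Cf k" using act_one[OF k] subgroup.m_closed[OF Cf_sub] by simp
  qed
  thus "x \<otimes>\<^bsub>Wr\<^esub> y \<in> H" unfolding x y Wr_mult H_def by simp
qed

end

lemma self_norm_exists:
  assumes sG: "simple_group G0" and fin: "finite (carrier G0)" and nc: "\<not> comm_group G0"
  shows "\<exists>M. subgroup M G0 \<and> M \<noteq> carrier G0 \<and>
     (\<forall>g\<in>carrier G0. (\<lambda>h. g \<otimes>\<^bsub>G0\<^esub> h \<otimes>\<^bsub>G0\<^esub> inv\<^bsub>G0\<^esub> g) ` M = M \<longrightarrow> g \<in> M)"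
proof -
  interpret simple_group G0 by (rule sG)
  define P where "P = {H. subgroup H G0 \<and> H \<noteq> carrier G0}"
  have finP: "finite P"
  proof (rule finite_subset[of _ "Pow (carrier G0)"])
    show "P \<subseteq> Pow (carrier G0)" unfolding P_def using subgroup.subset by blast
  qed (simp add: fin)
  have oneP: "{\<one>\<^bsub>G0\<^esub>} \<in> P" using simple_not_triv triv_subgroup unfolding P_def by auto
  obtain M where MP: "M \<in> P" and Mmax: "\<And>H. H \<in> P \<Longrightarrow> card H \<le> card M"
  proof -
    have ne: "card ` P \<noteq> {}" using oneP by blast
    have fi: "finite (card ` P)" using finP by simp
    obtain M where "M \<in> P" "card M = Max (card ` P)" using Max_in[OF fi ne] by auto
    moreover have "\<And>H. H \<in> P \<Longrightarrow> card H \<le> Max (card ` P)" using fi by simp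
    ultimately show ?thesis using that by auto
  qed
  have subM: "subgroup M G0" and Mne: "M \<noteq> carrier G0" using MP P_def by auto
  have Mc: "M \<subseteq> carrier G0" using subM subgroup.subset by blast
  define Nz where "Nz = normalizer G0 M"
  have Nzs: "subgroup Nz G0" unfolding Nz_def by (rule normalizer_imp_subgroup[OF Mc])
  have MNz: "M \<subseteq> Nz"
  proof
    fix m assume m: "m \<in> M"
    have mc: "m \<in> carrier G0" using m Mc by blast
    have "(\<lambda>h. m \<otimes>\<^bsub>G0\<^esub> h \<otimes>\<^bsub>G0\<^esub> inv\<^bsub>G0\<^esub> m) ` M = M"
    proof
      show "(\<lambda>h. m \<otimes>\<^bsub>G0\<^esub> h \<otimes>\<^bsub>G0\<^esub> inv\<^bsub>G0\<^esub> m) ` M \<subseteq> M"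
        using m subM by (auto intro: subgroup.m_closed subgroup.m_inv_closed)
      show "M \<subseteq> (\<lambda>h. m \<otimes>\<^bsub>G0\<^esub> h \<otimes>\<^bsub>G0\<^esub> inv\<^bsub>G0\<^esub> m) ` M"
      proof
        fix x assume x: "x \<in> M"
        have xc: "x \<in> carrier G0" using x Mc by blast
        have "inv\<^bsub>G0\<^esub> m \<otimes>\<^bsub>G0\<^esub> x \<otimes>\<^bsub>G0\<^esub> m \<in> M"
          using m x subM by (auto intro: subgroup.m_closed subgroup.m_inv_closed)
        moreover have "m \<otimes>\<^bsub>G0\<^esub> (inv\<^bsub>G0\<^esub> m \<otimes>\<^bsub>G0\<^esub> x \<otimes>\<^bsub>G0\<^esub> m) \<otimes>\<^bsub>G0\<^esub> inv\<^bsub>G0\<^esub> m = x"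
          using mc xc by (simp add: m_assoc flip: m_assoc[of m "inv\<^bsub>G0\<^esub> m"])
        ultimately show "x \<in> (\<lambda>h. m \<otimes>\<^bsub>G0\<^esub> h \<otimes>\<^bsub>G0\<^esub> inv\<^bsub>G0\<^esub> m) ` M" by (metis image_eqI)
      qed
    qed
    thus "m \<in> Nz" unfolding Nz_def normalizer_char[OF Mc] using mc by auto
  qed
  show ?thesis
  proof (cases "Nz = carrier G0")
    case False
    hence "Nz \<in> P" using Nzs P_def by auto
    hence "card Nz \<le> card M" using Mmax by auto
    moreover have "finite Nz" using Nzs fin subgroup.subset finite_subset by metis
    ultimately have "Nz = M" using MNz by (metis card_seteq)
    thus ?thesis using subM Mne unfolding Nz_def normalizer_char[OF Mc] by auto
  next
    case True
    have "M \<lhd> G0"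
      unfolding normal_inv_iff
    proof (intro conjI ballI subM)
      fix x h assume x: "x \<in> carrier G0" and h: "h \<in> M"
      have "(\<lambda>h. x \<otimes>\<^bsub>G0\<^esub> h \<otimes>\<^bsub>G0\<^esub> inv\<^bsub>G0\<^esub> x) ` M = M" using x True unfolding Nz_def normalizer_char[OF Mc] by auto
      thus "x \<otimes>\<^bsub>G0\<^esub> h \<otimes>\<^bsub>G0\<^esub> inv\<^bsub>G0\<^esub> x \<in> M" using h by blast
    qed
    hence M1: "M = {\<one>\<^bsub>G0\<^esub>}" using no_real_normal_subgroup Mne by blast
    obtain x where x: "x \<in> carrier G0" "x \<noteq> \<one>\<^bsub>G0\<^esub>" using simple_not_triv one_closed by blast
    have gs: "subgroup (generate G0 {x}) G0" using x generate_is_subgroup by auto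
    have xg: "x \<in> generate G0 {x}" by (simp add: generate.incl)
    have "generate G0 {x} = carrier G0"
    proof (rule ccontr)
      assume "generate G0 {x} \<noteq> carrier G0"
      hence "generate G0 {x} \<in> P" using gs P_def by auto
      hence "card (generate G0 {x}) \<le> 1" using Mmax M1 by fastforce
      moreover have "finite (generate G0 {x})" using gs fin subgroup.subset finite_subset by metis
      moreover have "{\<one>\<^bsub>G0\<^esub>, x} \<subseteq> generate G0 {x}" using xg gs subgroup.one_closed by auto
      ultimately have "card {\<one>\<^bsub>G0\<^esub>, x} \<le> 1" using card_mono by (metis le_trans)
      thus False using x(2) by simp
    qed
    hence pw: "carrier G0 = {x [^]\<^bsub>G0\<^esub> (k::int) | k. k \<in> UNIV}" using generate_pow[OF x(1)] by simp
    have "comm_group G0"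
    proof (rule group_comm_groupI)
      fix a b assume "a \<in> carrier G0" "b \<in> carrier G0"
      then obtain i j :: int where "a = x [^]\<^bsub>G0\<^esub> i" "b = x [^]\<^bsub>G0\<^esub> j" using pw by blast
      thus "a \<otimes>\<^bsub>G0\<^esub> b = b \<otimes>\<^bsub>G0\<^esub> a" using x(1) by (metis int_pow_mult add.commute)
    qed
    thus ?thesis using nc by blast
  qed
qed


lemma transport_nat:
  fixes W :: "'x monoid"
  assumes gW: "group W" and fin: "finite (carrier W)"
  shows "\<exists>(T::nat monoid) \<phi>. \<phi> \<in> iso W T \<and> group T \<and> finite (carrier T)"
proof -
  obtain h where h: "bij_betw h (carrier W) {0..<card (carrier W)}"
    using ex_bij_betw_finite_nat[OF fin] by blast
  define \<psi> where "\<psi> = inv_into (carrier W) h"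
  have inj: "inj_on h (carrier W)" using h bij_betw_def by blast
  have psih: "\<And>x. x \<in> carrier W \<Longrightarrow> \<psi> (h x) = x" unfolding \<psi>_def using inj by simp
  define T :: "nat monoid" where "T = \<lparr>carrier = h ` carrier W, monoid.mult = (\<lambda>x y. h (\<psi> x \<otimes>\<^bsub>W\<^esub> \<psi> y)), one = h \<one>\<^bsub>W\<^esub>\<rparr>"
  interpret W: group W by (rule gW)
  have hom: "h \<in> hom W T"
    unfolding hom_def T_def by (auto simp: psih)
  have iso: "h \<in> iso W T"
    using hom inj unfolding iso_def bij_betw_def T_def by auto
  have mon: "monoid T"
    apply (rule monoidI)
    unfolding T_def by (auto simp: psih W.m_assoc)
  have "group T"
    using W.iso_imp_group[OF is_isoI[OF iso] mon] .
  moreover have "finite (carrier T)" unfolding T_def using fin by simp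
  ultimately show ?thesis using iso by blast
qed


lemma conj_img_iso:
  assumes gW: "group W" and gT: "group T" and phi: "\<phi> \<in> iso W T"
    and x: "x \<in> carrier W" and H: "H \<subseteq> carrier W"
  shows "(\<lambda>h. \<phi> x \<otimes>\<^bsub>T\<^esub> h \<otimes>\<^bsub>T\<^esub> inv\<^bsub>T\<^esub> (\<phi> x)) ` (\<phi> ` H)
       = \<phi> ` ((\<lambda>h. x \<otimes>\<^bsub>W\<^esub> h \<otimes>\<^bsub>W\<^esub> inv\<^bsub>W\<^esub> x) ` H)"
proof -
  interpret gh: group_hom W T \<phi>
    using gW gT phi unfolding group_hom_def group_hom_axioms_def iso_def by auto
  have eq: "\<And>h. h \<in> H \<Longrightarrow> \<phi> x \<otimes>\<^bsub>T\<^esub> \<phi> h \<otimes>\<^bsub>T\<^esub> inv\<^bsub>T\<^esub> (\<phi> x) = \<phi> (x \<otimes>\<^bsub>W\<^esub> h \<otimes>\<^bsub>W\<^esub> inv\<^bsub>W\<^esub> x)"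
  proof -
    fix h assume "h \<in> H"
    hence hc: "h \<in> carrier W" using H by blast
    show "\<phi> x \<otimes>\<^bsub>T\<^esub> \<phi> h \<otimes>\<^bsub>T\<^esub> inv\<^bsub>T\<^esub> (\<phi> x) = \<phi> (x \<otimes>\<^bsub>W\<^esub> h \<otimes>\<^bsub>W\<^esub> inv\<^bsub>W\<^esub> x)"
      using x hc by (simp add: gh.hom_mult gh.hom_inv)
  qed
  have "(\<lambda>h. \<phi> x \<otimes>\<^bsub>T\<^esub> h \<otimes>\<^bsub>T\<^esub> inv\<^bsub>T\<^esub> (\<phi> x)) ` (\<phi> ` H) = (\<lambda>h. \<phi> x \<otimes>\<^bsub>T\<^esub> \<phi> h \<otimes>\<^bsub>T\<^esub> inv\<^bsub>T\<^esub> (\<phi> x)) ` H"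
    by (simp add: image_image)
  also have "\<dots> = (\<lambda>h. \<phi> (x \<otimes>\<^bsub>W\<^esub> h \<otimes>\<^bsub>W\<^esub> inv\<^bsub>W\<^esub> x)) ` H"
    by (rule image_cong[OF refl eq])
  also have "\<dots> = \<phi> ` ((\<lambda>h. x \<otimes>\<^bsub>W\<^esub> h \<otimes>\<^bsub>W\<^esub> inv\<^bsub>W\<^esub> x) ` H)"
    by (simp add: image_image)
  finally show ?thesis .
qed

lemma normalizer_iso:
  assumes gW: "group W" and gT: "group T" and phi: "\<phi> \<in> iso W T" and H: "H \<subseteq> carrier W"
  shows "normalizer T (\<phi> ` H) = \<phi> ` normalizer W H"
proof -
  have inj: "inj_on \<phi> (carrier W)" and img: "\<phi> ` carrier W = carrier T"
    using phi unfolding iso_def bij_betw_def by auto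
  have HT: "\<phi> ` H \<subseteq> carrier T" using H img by blast
  interpret GW: group W by (rule gW)
  have cW: "\<And>x. x \<in> carrier W \<Longrightarrow> (\<lambda>h. x \<otimes>\<^bsub>W\<^esub> h \<otimes>\<^bsub>W\<^esub> inv\<^bsub>W\<^esub> x) ` H \<subseteq> carrier W"
  proof
    fix x y assume x: "x \<in> carrier W" and "y \<in> (\<lambda>h. x \<otimes>\<^bsub>W\<^esub> h \<otimes>\<^bsub>W\<^esub> inv\<^bsub>W\<^esub> x) ` H"
    then obtain h where h: "h \<in> H" and yh: "y = x \<otimes>\<^bsub>W\<^esub> h \<otimes>\<^bsub>W\<^esub> inv\<^bsub>W\<^esub> x" by blast
    have "h \<in> carrier W" using h H by blast
    thus "y \<in> carrier W" using x yh by simp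
  qed
  have key: "((\<lambda>h. \<phi> x \<otimes>\<^bsub>T\<^esub> h \<otimes>\<^bsub>T\<^esub> inv\<^bsub>T\<^esub> (\<phi> x)) ` (\<phi> ` H) = \<phi> ` H) \<longleftrightarrow>
     ((\<lambda>h. x \<otimes>\<^bsub>W\<^esub> h \<otimes>\<^bsub>W\<^esub> inv\<^bsub>W\<^esub> x) ` H = H)" if x: "x \<in> carrier W" for x
    unfolding conj_img_iso[OF gW gT phi x H] by (rule inj_on_image_eq_iff[OF inj cW[OF x] H])
  show ?thesis
  proof (intro equalityI subsetI)
    fix y assume y: "y \<in> normalizer T (\<phi> ` H)"
    hence yc: "y \<in> carrier T" and yi: "(\<lambda>h. y \<otimes>\<^bsub>T\<^esub> h \<otimes>\<^bsub>T\<^esub> inv\<^bsub>T\<^esub> y) ` (\<phi> ` H) = \<phi> ` H"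
      unfolding normalizer_char[OF HT] by auto
    obtain x where x: "x \<in> carrier W" and yx: "y = \<phi> x" using yc img by blast
    have "(\<lambda>h. x \<otimes>\<^bsub>W\<^esub> h \<otimes>\<^bsub>W\<^esub> inv\<^bsub>W\<^esub> x) ` H = H" using key[OF x] yi yx by simp
    hence "x \<in> normalizer W H" unfolding normalizer_char[OF H] using x by simp
    thus "y \<in> \<phi> ` normalizer W H" using yx by blast
  next
    fix y assume "y \<in> \<phi> ` normalizer W H"
    then obtain x where x: "x \<in> normalizer W H" and yx: "y = \<phi> x" by blast
    have xc: "x \<in> carrier W" and xi: "(\<lambda>h. x \<otimes>\<^bsub>W\<^esub> h \<otimes>\<^bsub>W\<^esub> inv\<^bsub>W\<^esub> x) ` H = H"
      using x unfolding normalizer_char[OF H] by auto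
    have "(\<lambda>h. \<phi> x \<otimes>\<^bsub>T\<^esub> h \<otimes>\<^bsub>T\<^esub> inv\<^bsub>T\<^esub> (\<phi> x)) ` (\<phi> ` H) = \<phi> ` H" using key[OF xc] xi by simp
    thus "y \<in> normalizer T (\<phi> ` H)" unfolding normalizer_char[OF HT] using xc img yx by auto
  qed
qed

lemma ext_iso:
  assumes ext: "is_extension W A Q" and gT: "group T" and phi: "\<phi> \<in> iso W T"
  shows "is_extension T A Q"
proof -
  have gW: "group W" using ext unfolding is_extension_def by simp
  obtain i p where i: "i \<in> hom A W" and ii: "inj_on i (carrier A)" and p: "p \<in> hom W Q"
    and ps: "p ` carrier W = carrier Q" and ik: "i ` carrier A = kernel W Q p"
    using ext unfolding is_extension_def by blast
  define \<psi> where "\<psi> = inv_into (carrier W) \<phi>"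
  have psi: "\<psi> \<in> iso T W" unfolding \<psi>_def using group.iso_set_sym[OF gW phi] .
  have inj: "inj_on \<phi> (carrier W)" and img: "\<phi> ` carrier W = carrier T"
    using phi unfolding iso_def bij_betw_def by auto
  have psiphi: "\<And>x. x \<in> carrier W \<Longrightarrow> \<psi> (\<phi> x) = x" unfolding \<psi>_def using inj by simp
  have psiimg: "\<psi> ` carrier T = carrier W" using psi unfolding iso_def bij_betw_def by auto
  have psic: "\<And>y. y \<in> carrier T \<Longrightarrow> \<psi> y \<in> carrier W" using psiimg by blast
  have phipsi: "\<And>y. y \<in> carrier T \<Longrightarrow> \<phi> (\<psi> y) = y" unfolding \<psi>_def using img by (simp add: f_inv_into_f)
  have isub: "i ` carrier A \<subseteq> carrier W" using i unfolding hom_def by auto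
  show ?thesis unfolding is_extension_def
  proof (intro conjI gT exI[of _ "\<phi> \<circ> i"] exI[of _ "p \<circ> \<psi>"])
    show "\<phi> \<circ> i \<in> hom A T" using hom_compose[OF i] phi unfolding iso_def by blast
    show "inj_on (\<phi> \<circ> i) (carrier A)" using ii inj_on_subset[OF inj isub] by (rule comp_inj_on)
    show "p \<circ> \<psi> \<in> hom T Q" using hom_compose[OF _ p] psi unfolding iso_def by blast
    have "(p \<circ> \<psi>) ` carrier T = p ` (\<psi> ` carrier T)" by (rule image_comp[symmetric])
    thus "(p \<circ> \<psi>) ` carrier T = carrier Q" using ps psiimg by simp
    show "(\<phi> \<circ> i) ` carrier A = kernel T Q (p \<circ> \<psi>)"
    proof (intro equalityI subsetI)
      fix y assume "y \<in> (\<phi> \<circ> i) ` carrier A"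
      then obtain x where x: "x \<in> kernel W Q p" and yx: "y = \<phi> x" using ik by auto
      have xc: "x \<in> carrier W" and px: "p x = \<one>\<^bsub>Q\<^esub>" using x unfolding kernel_def by auto
      show "y \<in> kernel T Q (p \<circ> \<psi>)" unfolding kernel_def using xc px yx psiphi img by auto
    next
      fix y assume "y \<in> kernel T Q (p \<circ> \<psi>)"
      hence yc: "y \<in> carrier T" and py: "p (\<psi> y) = \<one>\<^bsub>Q\<^esub>" unfolding kernel_def by auto
      have "\<psi> y \<in> kernel W Q p" unfolding kernel_def using psic[OF yc] py by simp
      hence "\<phi> (\<psi> y) \<in> \<phi> ` i ` carrier A" using ik by simp
      thus "y \<in> (\<phi> \<circ> i) ` carrier A" using phipsi[OF yc] by (simp add: image_comp)
    qed
  qed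
qed

lemma quot_transfer:
  assumes gW: "group W" and gT: "group T" and phi: "\<phi> \<in> iso W T" and H: "subgroup H W"
    and gQ: "group Q" and gG: "group G"
    and pi: "\<pi> \<in> hom (W\<lparr>carrier := normalizer W H\<rparr>) Q" and pis: "\<pi> ` normalizer W H = carrier Q"
    and pik: "kernel (W\<lparr>carrier := normalizer W H\<rparr>) Q \<pi> = H" and psi: "\<psi> \<in> iso Q G"
  shows "subgroup (\<phi> ` H) T \<and> (T\<lparr>carrier := normalizer T (\<phi> ` H)\<rparr>) Mod (\<phi> ` H) \<cong> G"
proof -
  have Hc: "H \<subseteq> carrier W" using H subgroup.subset by blast
  interpret gh: group_hom W T \<phi>
    using gW gT phi unfolding group_hom_def group_hom_axioms_def iso_def by auto
  have inj: "inj_on \<phi> (carrier W)" and img: "\<phi> ` carrier W = carrier T"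
    using phi unfolding iso_def bij_betw_def by auto
  have subT: "subgroup (\<phi> ` H) T" using gh.subgroup_img_is_subgroup[OF H] .
  have HT: "\<phi> ` H \<subseteq> carrier T" using subT subgroup.subset by blast
  define Nw where "Nw = normalizer W H"
  have Nwc: "Nw \<subseteq> carrier W" unfolding Nw_def normalizer_char[OF Hc] by auto
  have NT: "normalizer T (\<phi> ` H) = \<phi> ` Nw" unfolding Nw_def by (rule normalizer_iso[OF gW gT phi Hc])
  define \<theta> where "\<theta> = inv_into (carrier W) \<phi>"
  have thphi: "\<And>x. x \<in> carrier W \<Longrightarrow> \<theta> (\<phi> x) = x" unfolding \<theta>_def using inj by simp
  define \<chi> where "\<chi> = (\<lambda>y. \<psi> (\<pi> (\<theta> y)))"
  have ghpsi: "group_hom Q G \<psi>"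
    using gQ gG psi unfolding group_hom_def group_hom_axioms_def iso_def by auto
  have psiinj: "inj_on \<psi> (carrier Q)" and psiimg: "\<psi> ` carrier Q = carrier G"
    using psi unfolding iso_def bij_betw_def by auto
  have pic: "\<And>x. x \<in> Nw \<Longrightarrow> \<pi> x \<in> carrier Q" using pi unfolding hom_def Nw_def by auto
  have pim: "\<And>x y. x \<in> Nw \<Longrightarrow> y \<in> Nw \<Longrightarrow> \<pi> (x \<otimes>\<^bsub>W\<^esub> y) = \<pi> x \<otimes>\<^bsub>Q\<^esub> \<pi> y"
    using pi unfolding hom_def Nw_def by auto
  have gNT: "group (T\<lparr>carrier := normalizer T (\<phi> ` H)\<rparr>)"
    using group.subgroup_imp_group[OF gT group.normalizer_imp_subgroup[OF gT HT]] .
  have Nws: "subgroup Nw W" unfolding Nw_def using group.normalizer_imp_subgroup[OF gW Hc] .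
  have hom: "\<chi> \<in> hom (T\<lparr>carrier := normalizer T (\<phi> ` H)\<rparr>) G"
  proof (rule homI)
    fix y assume "y \<in> carrier (T\<lparr>carrier := normalizer T (\<phi> ` H)\<rparr>)"
    then obtain x where x: "x \<in> Nw" and yx: "y = \<phi> x" using NT by auto
    have "\<theta> y = x" using thphi x Nwc yx by auto
    thus "\<chi> y \<in> carrier G" unfolding \<chi>_def using pic[OF x] psiimg by blast
  next
    fix y1 y2 assume "y1 \<in> carrier (T\<lparr>carrier := normalizer T (\<phi> ` H)\<rparr>)"
                 and "y2 \<in> carrier (T\<lparr>carrier := normalizer T (\<phi> ` H)\<rparr>)"
    then obtain x1 x2 where x1: "x1 \<in> Nw" and y1: "y1 = \<phi> x1" and x2: "x2 \<in> Nw" and y2: "y2 = \<phi> x2"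
      using NT by auto
    have x1c: "x1 \<in> carrier W" and x2c: "x2 \<in> carrier W" using x1 x2 Nwc by auto
    have "y1 \<otimes>\<^bsub>T\<^esub> y2 = \<phi> (x1 \<otimes>\<^bsub>W\<^esub> x2)" using y1 y2 gh.hom_mult[OF x1c x2c] by simp
    moreover have "x1 \<otimes>\<^bsub>W\<^esub> x2 \<in> carrier W" using monoid.m_closed[OF group.is_monoid[OF gW] x1c x2c] .
    ultimately have "\<theta> (y1 \<otimes>\<^bsub>T\<^esub> y2) = x1 \<otimes>\<^bsub>W\<^esub> x2" using thphi by simp
    hence "\<chi> (y1 \<otimes>\<^bsub>T\<^esub> y2) = \<psi> (\<pi> x1 \<otimes>\<^bsub>Q\<^esub> \<pi> x2)" unfolding \<chi>_def using pim x1 x2 by simp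
    also have "\<dots> = \<psi> (\<pi> x1) \<otimes>\<^bsub>G\<^esub> \<psi> (\<pi> x2)" using group_hom.hom_mult[OF ghpsi pic[OF x1] pic[OF x2]] .
    also have "\<dots> = \<chi> y1 \<otimes>\<^bsub>G\<^esub> \<chi> y2" unfolding \<chi>_def using y1 y2 thphi x1c x2c by simp
    finally show "\<chi> (y1 \<otimes>\<^bsub>T\<lparr>carrier := normalizer T (\<phi> ` H)\<rparr>\<^esub> y2) = \<chi> y1 \<otimes>\<^bsub>G\<^esub> \<chi> y2" by simp
  qed
  have ghchi: "group_hom (T\<lparr>carrier := normalizer T (\<phi> ` H)\<rparr>) G \<chi>"
    using gNT gG hom unfolding group_hom_def group_hom_axioms_def by auto
  have chiimg: "\<chi> ` carrier (T\<lparr>carrier := normalizer T (\<phi> ` H)\<rparr>) = carrier G"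
  proof -
    have "\<chi> ` (\<phi> ` Nw) = (\<lambda>x. \<chi> (\<phi> x)) ` Nw" by (simp add: image_image)
    also have "\<dots> = (\<lambda>x. \<psi> (\<pi> x)) ` Nw"
    proof (rule image_cong[OF refl])
      fix x assume "x \<in> Nw" thus "\<chi> (\<phi> x) = \<psi> (\<pi> x)" unfolding \<chi>_def using thphi Nwc by auto
    qed
    also have "\<dots> = \<psi> ` (\<pi> ` Nw)" by (simp add: image_image)
    finally have "\<chi> ` (\<phi> ` Nw) = \<psi> ` (\<pi> ` Nw)" .
    thus ?thesis using NT pis psiimg Nw_def by simp
  qed
  have ker: "kernel (T\<lparr>carrier := normalizer T (\<phi> ` H)\<rparr>) G \<chi> = \<phi> ` H"
  proof -
    have psi1: "\<psi> \<one>\<^bsub>Q\<^esub> = \<one>\<^bsub>G\<^esub>" using group_hom.hom_one[OF ghpsi] .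
    have q1: "\<one>\<^bsub>Q\<^esub> \<in> carrier Q" using monoid.one_closed[OF group.is_monoid[OF gQ]] .
    have eq: "\<psi> (\<pi> x) = \<one>\<^bsub>G\<^esub> \<longleftrightarrow> \<pi> x = \<one>\<^bsub>Q\<^esub>" if x: "x \<in> Nw" for x
      using inj_on_eq_iff[OF psiinj pic[OF x] q1] psi1 by simp
    have "kernel (T\<lparr>carrier := normalizer T (\<phi> ` H)\<rparr>) G \<chi> = \<phi> ` {x \<in> Nw. \<pi> x = \<one>\<^bsub>Q\<^esub>}"
    proof (intro equalityI subsetI)
      fix y assume "y \<in> kernel (T\<lparr>carrier := normalizer T (\<phi> ` H)\<rparr>) G \<chi>"
      hence y: "y \<in> \<phi> ` Nw" and y1: "\<chi> y = \<one>\<^bsub>G\<^esub>" unfolding kernel_def NT by auto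
      then obtain x where x: "x \<in> Nw" and yx: "y = \<phi> x" by blast
      have "\<chi> y = \<psi> (\<pi> x)" unfolding \<chi>_def yx using thphi x Nwc by auto
      hence "\<pi> x = \<one>\<^bsub>Q\<^esub>" using eq[OF x] y1 by simp
      thus "y \<in> \<phi> ` {x \<in> Nw. \<pi> x = \<one>\<^bsub>Q\<^esub>}" using x yx by blast
    next
      fix y assume "y \<in> \<phi> ` {x \<in> Nw. \<pi> x = \<one>\<^bsub>Q\<^esub>}"
      then obtain x where x: "x \<in> Nw" and px: "\<pi> x = \<one>\<^bsub>Q\<^esub>" and yx: "y = \<phi> x" by blast
      have "\<chi> y = \<psi> (\<pi> x)" unfolding \<chi>_def yx using thphi x Nwc by auto
      hence "\<chi> y = \<one>\<^bsub>G\<^esub>" using eq[OF x] px by simp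
      thus "y \<in> kernel (T\<lparr>carrier := normalizer T (\<phi> ` H)\<rparr>) G \<chi>" unfolding kernel_def NT using x yx by auto
    qed
    also have "{x \<in> Nw. \<pi> x = \<one>\<^bsub>Q\<^esub>} = H" using pik unfolding kernel_def Nw_def by simp
    finally show ?thesis .
  qed
  have "(T\<lparr>carrier := normalizer T (\<phi> ` H)\<rparr>) Mod (kernel (T\<lparr>carrier := normalizer T (\<phi> ` H)\<rparr>) G \<chi>) \<cong> G"
    using group_hom.FactGroup_iso[OF ghchi chiimg] .
  thus ?thesis using ker subT by simp
qed

theorem mainTheorem3:
  fixes G0 :: "'a monoid" and Gs :: "nat \<Rightarrow> 'b monoid"
  assumes "simple_group G0" and "finite (carrier G0)" and "\<not> comm_group G0"
    and "\<And>n. n \<ge> 1 \<Longrightarrow> group (Gs n) \<and> finite (carrier (Gs n))"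
    and "\<And>K :: nat monoid. group K \<Longrightarrow> finite (carrier K) \<Longrightarrow>
           (\<exists>n\<ge>1. \<exists>S. subgroup S (Gs n) \<and> K \<cong> (Gs n)\<lparr>carrier := S\<rparr>)"
  shows "\<And>G :: 'c monoid. group G \<Longrightarrow> finite (carrier G) \<Longrightarrow>
           (\<exists>n\<ge>1. \<exists>N\<ge>(1::nat). \<exists>Gamma :: nat monoid.
              finite (carrier Gamma) \<and> is_extension Gamma (power_group G0 N) (Gs n) \<and>
              (\<exists>H. subgroup H Gamma \<and>
                   (Gamma\<lparr>carrier := normalizer Gamma H\<rparr>) Mod H \<cong> G))"
proof -
  fix G :: "'c monoid"
  assume gG: "group G" and fG: "finite (carrier G)"
  have sG0: "simple_group G0" and fG0: "finite (carrier G0)" and ncG0: "\<not> comm_group G0"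
    using assms(1-3) .
  have gG0: "group G0" using sG0 simple_group_def by blast
  obtain K :: "nat monoid" and \<phi>G where phiG: "\<phi>G \<in> iso G K" and gK: "group K" and fK: "finite (carrier K)"
    using transport_nat[OF gG fG] by blast
  obtain n S where n: "n \<ge> 1" and S: "subgroup S (Gs n)" and KS: "K \<cong> (Gs n)\<lparr>carrier := S\<rparr>"
    using assms(5)[OF gK fK] by blast
  define B where "B = Gs n"
  have gB: "group B" and fB: "finite (carrier B)" using assms(4)[OF n] B_def by auto
  have SB: "subgroup S B" using S B_def by simp
  define Q where "Q = B\<lparr>carrier := S\<rparr>"
  have gQ: "group Q" unfolding Q_def using group.subgroup_imp_group[OF gB SB] .
  have GQ: "G \<cong> Q" using iso_trans[OF is_isoI[OF phiG] KS] unfolding Q_def B_def .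
  have "Q \<cong> G" using group.iso_sym[OF gG GQ] .
  then obtain \<psi> where psi: "\<psi> \<in> iso Q G" unfolding is_iso_def by blast
  obtain M where M: "subgroup M G0" and Mne: "M \<noteq> carrier G0"
    and selfn: "\<forall>g\<in>carrier G0. (\<lambda>h. g \<otimes>\<^bsub>G0\<^esub> h \<otimes>\<^bsub>G0\<^esub> inv\<^bsub>G0\<^esub> g) ` M = M \<longrightarrow> g \<in> M"
    using self_norm_exists[OF sG0 fG0 ncG0] by blast
  define N where "N = card (carrier B)"
  obtain e where e0: "bij_betw e {0..<N} (carrier B)" unfolding N_def using ex_bij_betw_nat_finite[OF fB] by blast
  have e: "bij_betw e {..<N} (carrier B)" using e0 by (simp add: atLeast0LessThan)
  have N1: "N \<ge> 1"
  proof -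
    have "carrier B \<noteq> {}" using group.is_monoid[OF gB] monoid.one_closed by blast
    thus ?thesis unfolding N_def using fB by (simp add: Suc_le_eq card_gt_0_iff)
  qed
  interpret W: wr2 G0 B e N S M
    by (simp add: wr2_def wr2_axioms_def wr_def wr_axioms_def gG0 gB e SB M Mne selfn)
  have gW: "group W.Wr" by (rule W.Wr_group)
  have fW: "finite (carrier W.Wr)" unfolding W.Wr_carrier using fG0 fB by (simp add: finite_PiE)
  obtain T :: "nat monoid" and \<phi> where phi: "\<phi> \<in> iso W.Wr T" and gT: "group T" and fT: "finite (carrier T)"
    using transport_nat[OF gW fW] by blast
  have extT: "is_extension T (power_group G0 N) B" using ext_iso[OF W.Wr_ext gT phi] .
  have pi: "snd \<in> hom (W.Wr\<lparr>carrier := normalizer W.Wr W.H\<rparr>) Q"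
  proof (rule homI)
    fix x assume "x \<in> carrier (W.Wr\<lparr>carrier := normalizer W.Wr W.H\<rparr>)"
    thus "snd x \<in> carrier Q" unfolding W.normalizer_eq Q_def by (simp add: mem_Times_iff)
  next
    fix x y show "snd (x \<otimes>\<^bsub>W.Wr\<lparr>carrier := normalizer W.Wr W.H\<rparr>\<^esub> y) = snd x \<otimes>\<^bsub>Q\<^esub> snd y"
      unfolding Q_def by (simp add: W.Wr_mult)
  qed
  have pis: "snd ` normalizer W.Wr W.H = carrier Q"
  proof -
    have "W.C \<noteq> {}" using W.one_C by blast
    thus ?thesis unfolding W.normalizer_eq Q_def by simp
  qed
  have pik: "kernel (W.Wr\<lparr>carrier := normalizer W.Wr W.H\<rparr>) Q snd = W.H"
    unfolding kernel_def W.normalizer_eq unfolding W.H_def Q_def using subgroup.one_closed[OF SB]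
    by (auto simp: mem_Times_iff)
  have res: "subgroup (\<phi> ` W.H) T \<and> (T\<lparr>carrier := normalizer T (\<phi> ` W.H)\<rparr>) Mod (\<phi> ` W.H) \<cong> G"
    using quot_transfer[OF gW gT phi W.H_subgroup gQ gG pi pis pik psi] .
  show "\<exists>n\<ge>1. \<exists>N\<ge>(1::nat). \<exists>Gamma :: nat monoid.
              finite (carrier Gamma) \<and> is_extension Gamma (power_group G0 N) (Gs n) \<and>
              (\<exists>H. subgroup H Gamma \<and>
                   (Gamma\<lparr>carrier := normalizer Gamma H\<rparr>) Mod H \<cong> G)"
    using n N1 fT extT res B_def by blast
qed

end
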